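(* The map $\rho:\mathrm{eval}_{-1}(\mathcal{B})\to\mathrm{GL}(2,\mathbb{Z})$ is an injective group homomorphism satisfying $\det\rho(B)=\det B$ for all $B\in\mathrm{eval}_{-1}(\mathcal{B})$.
   Context: For a matrix $A$ with Laurent polynomial entries, $\overline{A}$ denotes the matrix obtained by substituting $t\mapsto t^{-1}$ in every entry. Let $J_3=\begin{pmatrix}1&-t^{-1}&-t^{-1}\\-t&1&-t^{-1}\\-t&-t&1\end{pmatrix}$, $v=(t,t^2,t^3)$ (a row vector) and $\vec{1}=(1,1,1)^T$. The formal Burau group is $\mathcal{B}=\{A\in\mathrm{GL}(3,\mathbb{Z}[t,t^{-1}]) : vA=v,\ A\vec 1=\vec 1,\ \overline{A}J_3A^T=J_3\}$. $\mathrm{eval}_{-1}:\mathcal{B}\to\mathrm{GL}(3,\mathbb{Z})$ is evaluation of all entries at $t=-1$. For $B=(B_{ij})\in\mathrm{eval}_{-1}(\mathcal{B})$, $\rho(B)=\begin{pmatrix}1-B_{13}&1-B_{11}\\1-B_{33}&1-B_{31}\end{pmatrix}$. *)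

theory Defs
  imports "HOL-Analysis.Analysis" "HOL-Library.Numeral_Type"
          "HOL-Computational_Algebra.Formal_Laurent_Series"
begin

text \<open>Laurent polynomials Z[t,t^-1] are the formal Laurent series over int with
  finitely many nonzero coefficients; t is fls_X.\<close>

definition laurent_poly :: "int fls \<Rightarrow> bool" where
  "laurent_poly f \<longleftrightarrow> finite {n. fls_nth f n \<noteq> 0}"

definition lbar :: "int fls \<Rightarrow> int fls" where
  "lbar f = (\<Sum>n\<in>{n. fls_nth f n \<noteq> 0}. fls_const (fls_nth f n) * fls_X_intpow (-n))"

definition leval_m1 :: "int fls \<Rightarrow> int" where
  "leval_m1 f = (\<Sum>n\<in>{n. fls_nth f n \<noteq> 0}. fls_nth f n * (if even n then 1 else -1))"

definition mbar :: "int fls ^3^3 \<Rightarrow> int fls ^3^3" where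
  "mbar A = (\<chi> i j. lbar (A $ i $ j))"

definition meval_m1 :: "int fls ^3^3 \<Rightarrow> int ^3^3" where
  "meval_m1 A = (\<chi> i j. leval_m1 (A $ i $ j))"

definition laurent_matrix :: "int fls ^3^3 \<Rightarrow> bool" where
  "laurent_matrix A \<longleftrightarrow> (\<forall>i j. laurent_poly (A $ i $ j))"

definition GL3L :: "(int fls ^3^3) set" where
  "GL3L = {A. laurent_matrix A \<and>
              (\<exists>A'. laurent_matrix A' \<and> A ** A' = mat 1 \<and> A' ** A = mat 1)}"

text \<open>Indices 1,2,3 of the paper are the elements 1,2,3 of the numeral type 3.\<close>
definition J3 :: "int fls ^3^3" where
  "J3 = (\<chi> i j.
     if i = 1 then (if j = 1 then 1 else if j = 2 then - fls_X_inv else - fls_X_inv)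
     else if i = 2 then (if j = 1 then - fls_X else if j = 2 then 1 else - fls_X_inv)
     else (if j = 1 then - fls_X else if j = 2 then - fls_X else 1))"

definition vB :: "int fls ^3" where
  "vB = (\<chi> i. if i = 1 then fls_X else if i = 2 then fls_X ^ 2 else fls_X ^ 3)"

definition formal_burau :: "(int fls ^3^3) set" where
  "formal_burau = {A \<in> GL3L. vB v* A = vB \<and> A *v (\<chi> i. 1) = (\<chi> i. 1)
                     \<and> mbar A ** J3 ** transpose A = J3}"

definition rho :: "int ^3^3 \<Rightarrow> int ^2^2" where
  "rho B = (\<chi> i j.
     if i = 1 then (if j = 1 then 1 - B $ 1 $ 3 else 1 - B $ 1 $ 1)
     else (if j = 1 then 1 - B $ 3 $ 3 else 1 - B $ 3 $ 1))"

end

theory Submission imports Defs begin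

unbundle fps_syntax

definition sg :: "int \<Rightarrow> int" where "sg n = (if even n then 1 else -1)"

lemma sg_add: "sg (a + b) = sg a * sg b"
  by (auto simp: sg_def)

lemma sg_split: "sg n = sg i * sg (n - i)"
  using sg_add[of i "n - i"] by simp

lemma leval_alt: "leval_m1 f = (\<Sum>n\<in>{n. f $$ n \<noteq> 0}. f $$ n * sg n)"
  unfolding leval_m1_def sg_def by simp

lemma leval_superset:
  assumes "finite F" "{n. f $$ n \<noteq> 0} \<subseteq> F"
  shows "leval_m1 f = (\<Sum>n\<in>F. f $$ n * sg n)"
  unfolding leval_alt
  by (rule sum.mono_neutral_left) (use assms in auto)

lemma laurent_mult_nth:
  assumes "laurent_poly f"
  shows "(f * g) $$ n = (\<Sum>i\<in>{i. f $$ i \<noteq> 0}. f $$ i * g $$ (n - i))"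
proof -
  let ?F = "{i. f $$ i \<noteq> 0}"
  let ?I = "{fls_subdegree f..n - fls_subdegree g}"
  have fin: "finite ?F" using assms unfolding laurent_poly_def .
  have "(f * g) $$ n = (\<Sum>i\<in>?I. f $$ i * g $$ (n - i))"
    using fls_times_nth(2)[of f g n] .
  also have "\<dots> = (\<Sum>i\<in>?I \<union> ?F. f $$ i * g $$ (n - i))"
  proof (rule sum.mono_neutral_left)
    show "finite (?I \<union> ?F)" using fin by simp
    show "?I \<subseteq> ?I \<union> ?F" by (rule Un_upper1)
    show "\<forall>i\<in>?I \<union> ?F - ?I. f $$ i * g $$ (n - i) = 0"
    proof
      fix i assume i: "i \<in> ?I \<union> ?F - ?I"
      show "f $$ i * g $$ (n - i) = 0"
      proof (cases "f $$ i = 0")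
        case False
        then have "fls_subdegree f \<le> i" by (rule fls_subdegree_leI)
        moreover from i have "i \<notin> ?I" by blast
        ultimately have "n - i < fls_subdegree g" by (simp only: atLeastAtMost_iff simp_thms not_le)
        then show ?thesis by simp
      qed simp
    qed
  qed
  also have "\<dots> = (\<Sum>i\<in>?F. f $$ i * g $$ (n - i))"
  proof (rule sum.mono_neutral_right)
    show "finite (?I \<union> ?F)" using fin by simp
    show "?F \<subseteq> ?I \<union> ?F" by (rule Un_upper2)
    show "\<forall>i\<in>?I \<union> ?F - ?F. f $$ i * g $$ (n - i) = 0" by simp
  qed
  finally show ?thesis .
qed

lemma laurent_mult_supp:
  assumes "laurent_poly f" "laurent_poly g"
  shows "{n. (f * g) $$ n \<noteq> 0} \<subseteq> (\<lambda>(i,j). i + j) ` ({i. f $$ i \<noteq> 0} \<times> {j. g $$ j \<noteq> 0})"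
proof
  fix n assume "n \<in> {n. (f * g) $$ n \<noteq> 0}"
  then have neq: "(f * g) $$ n \<noteq> 0" by (rule CollectD)
  have eq: "(f * g) $$ n = (\<Sum>i\<in>{i. f $$ i \<noteq> 0}. f $$ i * g $$ (n - i))"
    by (rule laurent_mult_nth[OF assms(1)])
  have sne: "(\<Sum>i\<in>{i. f $$ i \<noteq> 0}. f $$ i * g $$ (n - i)) \<noteq> 0"
    using neq unfolding eq .
  have "\<not> (\<forall>i\<in>{i. f $$ i \<noteq> 0}. f $$ i * g $$ (n - i) = 0)"
  proof
    assume "\<forall>i\<in>{i. f $$ i \<noteq> 0}. f $$ i * g $$ (n - i) = 0"
    then have "(\<Sum>i\<in>{i. f $$ i \<noteq> 0}. f $$ i * g $$ (n - i)) = 0" by (rule sum.neutral)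
    with sne show False by contradiction
  qed
  then obtain i where i1: "f $$ i \<noteq> 0" and "f $$ i * g $$ (n - i) \<noteq> 0"
    by blast
  then have i2: "g $$ (n - i) \<noteq> 0" by simp
  have "n = (\<lambda>(i,j). i + j) (i, n - i)" by simp
  moreover have "(i, n - i) \<in> {i. f $$ i \<noteq> 0} \<times> {j. g $$ j \<noteq> 0}"
    using i1 i2 by simp
  ultimately show "n \<in> (\<lambda>(i,j). i + j) ` ({i. f $$ i \<noteq> 0} \<times> {j. g $$ j \<noteq> 0})"
    by (rule image_eqI)
qed

lemma laurent_mult:
  assumes "laurent_poly f" "laurent_poly g" shows "laurent_poly (f * g)"
proof -
  have fF: "finite {i. f $$ i \<noteq> 0}" and fG: "finite {j. g $$ j \<noteq> 0}"
    using assms unfolding laurent_poly_def by auto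
  have "finite ((\<lambda>(i,j). i + j) ` ({i. f $$ i \<noteq> 0} \<times> {j. g $$ j \<noteq> 0}))"
    by (intro finite_imageI finite_cartesian_product fF fG)
  then show ?thesis unfolding laurent_poly_def
    by (rule finite_subset[OF laurent_mult_supp[OF assms]])
qed

lemma leval_mult:
  assumes "laurent_poly f" "laurent_poly g"
  shows "leval_m1 (f * g) = leval_m1 f * leval_m1 g"
proof -
  let ?F = "{i. f $$ i \<noteq> 0}" and ?G = "{j. g $$ j \<noteq> 0}"
  define S where "S = (\<lambda>(i,j). i + j) ` (?F \<times> ?G)"
  have fF: "finite ?F" and fG: "finite ?G" using assms unfolding laurent_poly_def by auto
  have fS: "finite S" unfolding S_def using fF fG by auto
  have inner: "(\<Sum>n\<in>S. g $$ (n - i) * sg (n - i)) = leval_m1 g" if "i \<in> ?F" for i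
  proof -
    have "(\<Sum>n\<in>S. g $$ (n - i) * sg (n - i)) = (\<Sum>m\<in>(\<lambda>n. n - i) ` S. g $$ m * sg m)"
      by (subst sum.reindex) (auto simp: inj_on_def)
    also have "\<dots> = leval_m1 g"
    proof (rule leval_superset[symmetric])
      show "finite ((\<lambda>n. n - i) ` S)" using fS by auto
      show "?G \<subseteq> (\<lambda>n. n - i) ` S"
      proof
        fix j assume "j \<in> ?G"
        then have "i + j \<in> S" unfolding S_def using that by force
        then show "j \<in> (\<lambda>n. n - i) ` S" by (intro image_eqI[of _ _ "i + j"]) auto
      qed
    qed
    finally show ?thesis .
  qed
  have "leval_m1 (f * g) = (\<Sum>n\<in>S. (f * g) $$ n * sg n)"
    using leval_superset[OF fS] laurent_mult_supp[OF assms] unfolding S_def by blast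
  also have "\<dots> = (\<Sum>n\<in>S. \<Sum>i\<in>?F. f $$ i * g $$ (n - i) * sg n)"
    by (simp add: laurent_mult_nth[OF assms(1)] sum_distrib_right)
  also have "\<dots> = (\<Sum>i\<in>?F. \<Sum>n\<in>S. (f $$ i * sg i) * (g $$ (n - i) * sg (n - i)))"
  proof (subst sum.swap, intro sum.cong refl)
    fix i n show "f $$ i * g $$ (n - i) * sg n = (f $$ i * sg i) * (g $$ (n - i) * sg (n - i))"
      by (subst sg_split[of n i]) (simp add: mult_ac)
  qed
  also have "\<dots> = (\<Sum>i\<in>?F. (f $$ i * sg i) * leval_m1 g)"
  proof (intro sum.cong refl)
    fix i assume "i \<in> ?F"
    then show "(\<Sum>n\<in>S. (f $$ i * sg i) * (g $$ (n - i) * sg (n - i))) = (f $$ i * sg i) * leval_m1 g"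
      by (simp only: sum_distrib_left[symmetric] inner)
  qed
  also have "\<dots> = leval_m1 f * leval_m1 g"
    by (simp only: leval_alt sum_distrib_right)
  finally show ?thesis .
qed


lemma laurent_add_supp: "{n. (f + g) $$ n \<noteq> 0} \<subseteq> {n. f $$ n \<noteq> 0} \<union> {n. g $$ n \<noteq> 0}"
  by auto

lemma laurent_add:
  assumes "laurent_poly f" "laurent_poly g" shows "laurent_poly (f + g)"
proof -
  have "finite ({n. f $$ n \<noteq> 0} \<union> {n. g $$ n \<noteq> 0})" using assms unfolding laurent_poly_def by blast
  then show ?thesis unfolding laurent_poly_def by (rule finite_subset[OF laurent_add_supp])
qed

lemma leval_add:
  assumes "laurent_poly f" "laurent_poly g"
  shows "leval_m1 (f + g) = leval_m1 f + leval_m1 g"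
proof -
  let ?S = "{n. f $$ n \<noteq> 0} \<union> {n. g $$ n \<noteq> 0}"
  have fS: "finite ?S" using assms unfolding laurent_poly_def by blast
  have "leval_m1 (f + g) = (\<Sum>n\<in>?S. (f + g) $$ n * sg n)"
    by (rule leval_superset[OF fS laurent_add_supp])
  also have "\<dots> = (\<Sum>n\<in>?S. f $$ n * sg n) + (\<Sum>n\<in>?S. g $$ n * sg n)"
    by (simp only: fls_plus_nth distrib_right sum.distrib)
  also have "\<dots> = leval_m1 f + leval_m1 g"
    by (simp only: leval_superset[OF fS Un_upper1] leval_superset[OF fS Un_upper2])
  finally show ?thesis .
qed

lemma laurent_zero: "laurent_poly 0" unfolding laurent_poly_def by simp

lemma leval_zero: "leval_m1 0 = 0" unfolding leval_m1_def by simp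

lemma leval_single:
  assumes "{n. f $$ n \<noteq> 0} \<subseteq> {k}"
  shows "leval_m1 f = f $$ k * sg k" "laurent_poly f"
  using leval_superset[OF _ assms] apply simp
  using assms unfolding laurent_poly_def by (rule finite_subset) simp

lemma one_supp: "{n. (1::int fls) $$ n \<noteq> 0} \<subseteq> {0}" by auto
lemma X_supp: "{n. (fls_X::int fls) $$ n \<noteq> 0} \<subseteq> {1}" by auto
lemma Xinv_supp: "{n. (fls_X_inv::int fls) $$ n \<noteq> 0} \<subseteq> {-1}" by auto
lemma Xpow_supp: "{n. ((fls_X::int fls) ^ k) $$ n \<noteq> 0} \<subseteq> {int k}" by auto

lemma leval_consts:
  "leval_m1 1 = 1" "leval_m1 fls_X = -1" "leval_m1 fls_X_inv = -1"
  "leval_m1 (fls_X ^ 2) = 1" "leval_m1 (fls_X ^ 3) = -1"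
  "laurent_poly 1" "laurent_poly fls_X" "laurent_poly fls_X_inv"
  "laurent_poly (fls_X ^ 2)" "laurent_poly (fls_X ^ 3)"
  using leval_single[OF one_supp] leval_single[OF X_supp] leval_single[OF Xinv_supp]
    leval_single[OF Xpow_supp[of 2]] leval_single[OF Xpow_supp[of 3]]
  by (simp_all add: sg_def)

lemma laurent_uminus: "laurent_poly f \<Longrightarrow> laurent_poly (- f)"
  unfolding laurent_poly_def by simp

lemma leval_uminus: "leval_m1 (- f) = - leval_m1 f"
  unfolding leval_m1_def by (simp add: sum_negf)

unbundle no fps_syntax

lemma leval_sum:
  assumes "finite I" "\<And>i. i \<in> I \<Longrightarrow> laurent_poly (h i)"
  shows "leval_m1 (\<Sum>i\<in>I. h i) = (\<Sum>i\<in>I. leval_m1 (h i)) \<and> laurent_poly (\<Sum>i\<in>I. h i)"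
  using assms
proof (induction I rule: finite_induct)
  case empty
  then show ?case by (simp add: leval_zero laurent_zero)
next
  case (insert x F)
  then have h: "laurent_poly (h x)" "leval_m1 (sum h F) = (\<Sum>i\<in>F. leval_m1 (h i))"
    "laurent_poly (sum h F)" by auto
  then show ?case using insert(1,2)
    by (simp add: leval_add laurent_add)
qed

lemma meval_mult:
  assumes "laurent_matrix A" "laurent_matrix B"
  shows "meval_m1 (A ** B) = meval_m1 A ** meval_m1 B" "laurent_matrix (A ** B)"
proof -
  have l: "\<And>i j. laurent_poly (A$i$j)" "\<And>i j. laurent_poly (B$i$j)"
    using assms unfolding laurent_matrix_def by auto
  have e: "leval_m1 (\<Sum>k\<in>UNIV. A$i$k * B$k$j) = (\<Sum>k\<in>UNIV. leval_m1 (A$i$k) * leval_m1 (B$k$j))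
     \<and> laurent_poly (\<Sum>k\<in>UNIV. A$i$k * B$k$j)" for i j
    using leval_sum[of UNIV "\<lambda>k. A$i$k * B$k$j"] by (simp add: l laurent_mult leval_mult)
  show "meval_m1 (A ** B) = meval_m1 A ** meval_m1 B"
    unfolding meval_m1_def matrix_matrix_mult_def vec_eq_iff using e by simp
  show "laurent_matrix (A ** B)"
    unfolding laurent_matrix_def matrix_matrix_mult_def using e by simp
qed

lemma meval_one: "meval_m1 (mat 1) = mat 1"
  unfolding meval_m1_def mat_def vec_eq_iff by (simp add: leval_consts leval_zero)

definition mk :: "int \<Rightarrow> int \<Rightarrow> int \<Rightarrow> int \<Rightarrow> int^3^3" where
 "mk a c d e = (\<chi> i j. if i = 1 then (if j = 1 then a else if j = 2 then 1 - a - c else c)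
   else if i = 2 then (if j = 1 then a + d - 1 else if j = 2 then 3 - a - c - d - e else c + e - 1)
   else (if j = 1 then d else if j = 2 then 1 - d - e else e))"

definition wv :: "int^3" where "wv = (\<chi> i. if i = 2 then 1 else -1)"

definition cons :: "int^3^3 \<Rightarrow> bool" where
  "cons B \<longleftrightarrow> (\<forall>i. (\<Sum>j\<in>UNIV. B$i$j) = 1) \<and> (\<forall>j. (\<Sum>i\<in>UNIV. wv$i * B$i$j) = wv$j)"

lemma three_neq: "(1::3) \<noteq> 2" "(1::3) \<noteq> 3" "(2::3) \<noteq> 3" "(2::3) \<noteq> 1" "(3::3) \<noteq> 1" "(3::3) \<noteq> 2"
  by simp_all

lemma two_neq: "(1::2) \<noteq> 2" "(2::2) \<noteq> 1" by simp_all

lemma cons_mk: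
  assumes "cons B" shows "B = mk (B$1$1) (B$1$3) (B$3$1) (B$3$3)"
proof -
  from assms have r: "\<And>i. B$i$1 + B$i$2 + B$i$3 = 1"
    and c: "\<And>j. - B$1$j + B$2$j - B$3$j = wv$j"
    unfolding cons_def sum_3 wv_def by (auto simp: three_neq)
  show ?thesis
    unfolding mk_def vec_eq_iff forall_3
    using r[of 1] r[of 2] r[of 3] c[of 1] c[of 2] c[of 3]
    by (simp add: three_neq wv_def) 
qed

lemma rho_mult_mk:
  "rho (mk a c d e ** mk a' c' d' e') = rho (mk a c d e) ** rho (mk a' c' d' e')"
  unfolding rho_def mk_def matrix_matrix_mult_def vec_eq_iff forall_2 sum_2 sum_3
  by (simp add: three_neq two_neq algebra_simps)

lemma det_rho_mk: "det (rho (mk a c d e)) = det (mk a c d e)"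
  unfolding det_2 det_3 rho_def mk_def
  by (simp add: three_neq two_neq algebra_simps)

lemma rho_mk_inj:
  assumes "rho (mk a c d e) = rho (mk a' c' d' e')"
  shows "mk a c d e = mk a' c' d' e'"
proof -
  from assms have "(rho (mk a c d e))$1$1 = (rho (mk a' c' d' e'))$1$1"
     "(rho (mk a c d e))$1$2 = (rho (mk a' c' d' e'))$1$2"
     "(rho (mk a c d e))$2$1 = (rho (mk a' c' d' e'))$2$1"
     "(rho (mk a c d e))$2$2 = (rho (mk a' c' d' e'))$2$2" by simp_all
  then have "c = c'" "a = a'" "e = e'" "d = d'"
    unfolding rho_def mk_def by (simp_all add: three_neq two_neq)
  then show ?thesis by simp
qed

lemma inv2:
  fixes M :: "int^2^2"
  assumes "det M * det M = 1"
  shows "invertible M"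
proof -
  define N :: "int^2^2" where "N = (\<chi> i j. det M * (if i = 1 then (if j = 1 then M$2$2 else - M$1$2)
        else (if j = 1 then - M$2$1 else M$1$1)))"
  have "M ** N = mat 1" "N ** M = mat 1"
    using assms unfolding N_def matrix_matrix_mult_def mat_def vec_eq_iff forall_2 sum_2 det_2
    by (simp_all add: two_neq algebra_simps)
  then show ?thesis unfolding invertible_def by blast
qed


lemma leval_vB: "leval_m1 (vB$i) = wv$i \<and> laurent_poly (vB$i)"
  using exhaust_3[of i] unfolding vB_def wv_def
  by (auto simp: leval_consts three_neq)

lemma burau_props:
  assumes "A \<in> formal_burau"
  shows "cons (meval_m1 A)" "det (meval_m1 A) * det (meval_m1 A) = 1"
proof -
  from assms have gl: "A \<in> GL3L" and v: "vB v* A = vB" and one: "A *v (\<chi> i. 1) = (\<chi> i. 1)"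
    unfolding formal_burau_def by auto
  from gl obtain A' where lA: "laurent_matrix A" and lA': "laurent_matrix A'" and inv: "A ** A' = mat 1"
    unfolding GL3L_def by blast
  have l: "\<And>i j. laurent_poly (A$i$j)" using lA unfolding laurent_matrix_def by auto
  have "meval_m1 A ** meval_m1 A' = mat 1"
    using meval_mult(1)[OF lA lA'] inv meval_one by simp
  then have "det (meval_m1 A) * det (meval_m1 A') = 1"
    by (metis det_I det_mul)
  then show "det (meval_m1 A) * det (meval_m1 A) = 1"
    by (auto simp: zmult_eq_1_iff)
  have rows: "(\<Sum>j\<in>UNIV. meval_m1 A $i$j) = 1" for i
  proof -
    have "(A *v (\<chi> i. 1))$i = 1" using one by simp
    then have "(\<Sum>j\<in>UNIV. A$i$j) = 1" unfolding matrix_vector_mult_def by simp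
    then have "leval_m1 (\<Sum>j\<in>UNIV. A$i$j) = 1" by (simp add: leval_consts)
    then show ?thesis using leval_sum[of UNIV "\<lambda>j. A$i$j"] l unfolding meval_m1_def by simp
  qed
  have cols: "(\<Sum>i\<in>UNIV. wv$i * meval_m1 A $i$j) = wv$j" for j
  proof -
    have "(vB v* A)$j = vB$j" using v by simp
    then have "(\<Sum>i\<in>UNIV. vB$i * A$i$j) = vB$j" unfolding vector_matrix_mult_def by simp
    then have "leval_m1 (\<Sum>i\<in>UNIV. vB$i * A$i$j) = wv$j" using leval_vB by simp
    then show ?thesis using leval_sum[of UNIV "\<lambda>i. vB$i * A$i$j"] l leval_vB
      unfolding meval_m1_def by (simp add: leval_mult laurent_mult)
  qed
  show "cons (meval_m1 A)" unfolding cons_def using rows cols by blast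
qed

lemma image_props:
  assumes "B \<in> meval_m1 ` formal_burau"
  shows "B = mk (B$1$1) (B$1$3) (B$3$1) (B$3$3)" "det B * det B = 1"
  using assms burau_props cons_mk by auto

theorem lemma3p8:
  shows "(\<forall>B\<in>meval_m1 ` formal_burau. invertible (rho B) \<and> det (rho B) = det B)
       \<and> (\<forall>B1\<in>meval_m1 ` formal_burau. \<forall>B2\<in>meval_m1 ` formal_burau.
            rho (B1 ** B2) = rho B1 ** rho B2)
       \<and> inj_on rho (meval_m1 ` formal_burau)"
proof (intro conjI ballI inj_onI)
  fix B assume B: "B \<in> meval_m1 ` formal_burau"
  show dB: "det (rho B) = det B"
    using det_rho_mk image_props(1)[OF B] by metis
  show "invertible (rho B)"
    using inv2 dB image_props(2)[OF B] by metis
next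
  fix B1 B2 assume B1: "B1 \<in> meval_m1 ` formal_burau" and B2: "B2 \<in> meval_m1 ` formal_burau"
  show "rho (B1 ** B2) = rho B1 ** rho B2"
    using rho_mult_mk image_props(1)[OF B1] image_props(1)[OF B2] by metis
next
  fix B1 B2 assume B1: "B1 \<in> meval_m1 ` formal_burau" and B2: "B2 \<in> meval_m1 ` formal_burau"
    and eq: "rho B1 = rho B2"
  show "B1 = B2"
    using rho_mk_inj eq image_props(1)[OF B1] image_props(1)[OF B2] by metis
qed

end
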